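(* There exists a planar graph $G$ with $HG(G)=12$. Specifically, let $m=66^{144}$ and let $G$ be the graph with vertex set $\{u,v\}\cup\{x_i,y_i: 1\le i\le m\}$ whose edges are $uv$, the $m$ edges $x_iy_i$ ($1\le i\le m$), and all edges $ux_i,uy_i,vx_i,vy_i$ ($1\le i\le m$). Then $G$ is planar and $HG(G)=12$.
   Context: The hat guessing game on a finite simple graph $G$ with $q$ colors: each vertex (player) is assigned a hat whose color is an arbitrary element of a fixed set $Q$ of $q$ colors. Each player sees the hat colors of exactly its neighbors in $G$ (not its own). Before the colors are assigned, the players fix a deterministic guessing strategy: for each vertex $w$, a function from the colorings of the neighbors of $w$ to $Q$, which is $w$'s guess for its own color. No communication is allowed. The strategy is winning if for every assignment of colors from $Q$ to all vertices, at least one vertex guesses its own color correctly. The hat guessing number $HG(G)$ is the largest integer $q$ for which a winning strategy with $q$ colors exists. *)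

theory Defs
  imports "HOL-Analysis.Analysis"
begin

definition simple_graph :: "'a set \<Rightarrow> ('a \<Rightarrow> 'a \<Rightarrow> bool) \<Rightarrow> bool" where
  "simple_graph VV E \<longleftrightarrow> finite VV \<and> (\<forall>a b. E a b \<longrightarrow> a \<in> VV \<and> b \<in> VV)
     \<and> (\<forall>a b. E a b \<longrightarrow> E b a) \<and> (\<forall>a. \<not> E a a)"

definition hat_strategy :: "'a set \<Rightarrow> ('a \<Rightarrow> 'a \<Rightarrow> bool) \<Rightarrow> nat \<Rightarrow> ('a \<Rightarrow> ('a \<Rightarrow> nat) \<Rightarrow> nat) \<Rightarrow> bool" where
  "hat_strategy VV E q g \<longleftrightarrow>
     (\<forall>w\<in>VV. \<forall>c c'. (\<forall>u. E w u \<longrightarrow> c u = c' u) \<longrightarrow> g w c = g w c')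
   \<and> (\<forall>w\<in>VV. \<forall>c. g w c < q)"

definition winning_strategy :: "'a set \<Rightarrow> ('a \<Rightarrow> 'a \<Rightarrow> bool) \<Rightarrow> nat \<Rightarrow> ('a \<Rightarrow> ('a \<Rightarrow> nat) \<Rightarrow> nat) \<Rightarrow> bool" where
  "winning_strategy VV E q g \<longleftrightarrow> hat_strategy VV E q g \<and>
     (\<forall>c. (\<forall>v\<in>VV. c v < q) \<longrightarrow> (\<exists>v\<in>VV. g v c = c v))"

definition hat_winnable :: "'a set \<Rightarrow> ('a \<Rightarrow> 'a \<Rightarrow> bool) \<Rightarrow> nat \<Rightarrow> bool" where
  "hat_winnable VV E q \<longleftrightarrow> (\<exists>g. winning_strategy VV E q g)"

definition HG :: "'a set \<Rightarrow> ('a \<Rightarrow> 'a \<Rightarrow> bool) \<Rightarrow> nat" where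
  "HG VV E = (GREATEST q. hat_winnable VV E q)"

definition planar :: "'a set \<Rightarrow> ('a \<Rightarrow> 'a \<Rightarrow> bool) \<Rightarrow> bool" where
  "planar VV E \<longleftrightarrow> (\<exists>(f :: 'a \<Rightarrow> complex) (\<gamma> :: 'a \<Rightarrow> 'a \<Rightarrow> real \<Rightarrow> complex).
     inj_on f VV \<and>
     (\<forall>a b. E a b \<longrightarrow> arc (\<gamma> a b) \<and> pathstart (\<gamma> a b) = f a \<and> pathfinish (\<gamma> a b) = f b
         \<and> path_image (\<gamma> a b) \<inter> f ` VV \<subseteq> {f a, f b}) \<and>
     (\<forall>a b c d. E a b \<longrightarrow> E c d \<longrightarrow> {a, b} \<noteq> {c, d} \<longrightarrow>
         path_image (\<gamma> a b) \<inter> path_image (\<gamma> c d) \<subseteq> f ` ({a, b} \<inter> {c, d})))"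

datatype vtx = U | V | X nat | Y nat

definition m0 :: nat where "m0 = 66 ^ 144"

definition GV :: "vtx set" where
  "GV = {U, V} \<union> {X i | i. 1 \<le> i \<and> i \<le> m0} \<union> {Y i | i. 1 \<le> i \<and> i \<le> m0}"

fun GE0 :: "vtx \<Rightarrow> vtx \<Rightarrow> bool" where
  "GE0 U V = True"
| "GE0 (X i) (Y j) = (i = j)"
| "GE0 U (X i) = True"
| "GE0 U (Y i) = True"
| "GE0 V (X i) = True"
| "GE0 V (Y i) = True"
| "GE0 _ _ = False"

definition GE :: "vtx \<Rightarrow> vtx \<Rightarrow> bool" where
  "GE a b \<longleftrightarrow> a \<in> GV \<and> b \<in> GV \<and> (GE0 a b \<or> GE0 b a)"

end

theory Submission
  imports Defs
begin

lemma inGV[simp]: "U \<in> GV" "V \<in> GV" "X i \<in> GV \<longleftrightarrow> 1 \<le> i \<and> i \<le> m0" "Y i \<in> GV \<longleftrightarrow> 1 \<le> i \<and> i \<le> m0"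
  by (auto simp: GV_def)

lemma GV_eq: "GV = {U,V} \<union> X ` {1..m0} \<union> Y ` {1..m0}"
  by (auto simp: GV_def)

lemma finite_GV: "finite GV" by (simp add: GV_eq)

lemma GE_U[simp]: "GE U w \<longleftrightarrow> w \<in> GV \<and> w \<noteq> U"
  by (cases w) (auto simp: GE_def)
lemma GE_V[simp]: "GE V w \<longleftrightarrow> w \<in> GV \<and> w \<noteq> V"
  by (cases w) (auto simp: GE_def)
lemma GE_X[simp]: "GE (X i) w \<longleftrightarrow> X i \<in> GV \<and> (w = U \<or> w = V \<or> w = Y i)"
  by (cases w) (auto simp: GE_def)
lemma GE_Y[simp]: "GE (Y i) w \<longleftrightarrow> Y i \<in> GV \<and> (w = U \<or> w = V \<or> w = X i)"
  by (cases w) (auto simp: GE_def)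

lemma simple: "simple_graph GV GE"
proof -
  have "\<forall>a. \<not> GE a a" by (intro allI, case_tac a) auto
  thus ?thesis unfolding simple_graph_def using finite_GV by (auto simp: GE_def)
qed

lemma not_win:
  assumes q: "13 \<le> q" and W: "winning_strategy GV GE q g"
  shows False
proof -
  from W have loc: "\<And>w c c'. w\<in>GV \<Longrightarrow> (\<And>u. GE w u \<Longrightarrow> c u = c' u) \<Longrightarrow> g w c = g w c'"
    and win: "\<And>c. (\<forall>v\<in>GV. c v < q) \<Longrightarrow> (\<exists>v\<in>GV. g v c = c v)"
    unfolding winning_strategy_def hat_strategy_def by blast+
  define ct where "ct i a b s t = (\<lambda>w. if w = U then a else if w = V then b else if w = X i then s else if w = Y i then t else (0::nat))" for i a b s t
  define RC where "RC = {0,1::nat} \<times> {0,1,2::nat}"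
  define G where "G i a b t = g (X i) (ct i a b 0 t)" for i a b t
  define H where "H i a b s = g (Y i) (ct i a b s 0)" for i a b s
  define bad where "bad i = (\<Union>p\<in>RC. (\<lambda>t. (G i (fst p) (snd p) t, t)) ` {..<q} \<union> (\<lambda>s. (s, H i (fst p) (snd p) s)) ` {..<q})" for i
  have cRC: "card RC = 6" "finite RC" by (auto simp: RC_def)
  have ex: "\<exists>st. st \<in> {..<q}\<times>{..<q} - bad i" for i
  proof -
    have fb: "finite (bad i)" unfolding bad_def using cRC by auto
    have "card (bad i) \<le> (\<Sum>p\<in>RC. card ((\<lambda>t. (G i (fst p) (snd p) t, t)) ` {..<q} \<union> (\<lambda>s. (s, H i (fst p) (snd p) s)) ` {..<q}))"
      unfolding bad_def by (rule card_UN_le) (simp add: cRC)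
    also have "\<dots> \<le> (\<Sum>p\<in>RC. q + q)"
    proof (rule sum_mono)
      fix p
      have "card ((\<lambda>t. (G i (fst p) (snd p) t, t)) ` {..<q} \<union> (\<lambda>s. (s, H i (fst p) (snd p) s)) ` {..<q})
         \<le> card ((\<lambda>t. (G i (fst p) (snd p) t, t)) ` {..<q}) + card ((\<lambda>s. (s, H i (fst p) (snd p) s)) ` {..<q})"
        by (rule card_Un_le)
      also have "\<dots> \<le> q + q" using card_image_le[of "{..<q}"] by (metis add_mono card_lessThan finite_lessThan)
      finally show "card ((\<lambda>t. (G i (fst p) (snd p) t, t)) ` {..<q} \<union> (\<lambda>s. (s, H i (fst p) (snd p) s)) ` {..<q}) \<le> q + q" .
    qed
    also have "\<dots> = 6 * (q + q)" using cRC by simp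
    also have "\<dots> < q * q" using q by (simp add: algebra_simps)
    also have "\<dots> = card ({..<q}\<times>{..<q})" by (simp add: card_cartesian_product)
    finally have "card (bad i) < card ({..<q}\<times>{..<q})" .
    hence "\<not> {..<q}\<times>{..<q} \<subseteq> bad i" using fb card_mono by (metis not_le)
    thus ?thesis by blast
  qed
  then obtain st where st: "\<And>i. st i \<in> {..<q}\<times>{..<q} - bad i" by metis
  define c where "c a b = (\<lambda>w. case w of U \<Rightarrow> a | V \<Rightarrow> b | X i \<Rightarrow> fst (st i) | Y i \<Rightarrow> snd (st i))" for a b
  have gX: "g (X i) (c a b) = G i a b (snd (st i))" if "X i \<in> GV" for i a b
    unfolding G_def by (rule loc[OF that]) (auto simp: c_def ct_def)
  have gY: "g (Y i) (c a b) = H i a b (fst (st i))" if "Y i \<in> GV" for i a b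
    unfolding H_def by (rule loc[OF that]) (auto simp: c_def ct_def)
  define \<phi> where "\<phi> b = g U (c 0 b)" for b
  define \<psi> where "\<psi> a = g V (c a 0)" for a
  have gU: "g U (c a b) = \<phi> b" for a b
    unfolding \<phi>_def by (rule loc) (auto simp: c_def split: vtx.splits)
  have gV: "g V (c a b) = \<psi> a" for a b
    unfolding \<psi>_def by (rule loc) (auto simp: c_def split: vtx.splits)
  obtain a b where ab: "(a,b)\<in>RC" "\<phi> b \<noteq> a" "\<psi> a \<noteq> b"
  proof -
    have "\<exists>a b. (a,b)\<in>RC \<and> \<phi> b \<noteq> a \<and> \<psi> a \<noteq> b"
    proof (rule ccontr)
      assume "\<not> ?thesis"
      hence h: "\<And>a b. (a,b)\<in>RC \<Longrightarrow> \<phi> b = a \<or> \<psi> a = b" by blast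
      obtain bb where bb: "bb \<in> {0,1,2::nat}" "bb \<noteq> \<psi> 0" "bb \<noteq> \<psi> 1" by (metis insertCI numeral_One one_neq_zero  numeral_eq_iff semiring_norm(85) n_not_Suc_n Suc_1 numeral_2_eq_2 zero_neq_numeral)
      from h[of 0 bb] h[of 1 bb] bb show False by (auto simp: RC_def)
    qed
    thus ?thesis using that by blast
  qed
  have "\<forall>v\<in>GV. c a b v < q"
  proof
    fix v assume "v \<in> GV" thus "c a b v < q" using ab(1) q st by (cases v) (auto simp: c_def RC_def mem_Times_iff)
  qed
  from win[OF this] obtain v where v: "v \<in> GV" "g v (c a b) = c a b v" by blast
  show False
  proof (cases v)
    case U thus ?thesis using v gU ab by (simp add: c_def)
  next
    case V thus ?thesis using v gV ab by (simp add: c_def)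
  next
    case (X i)
    with v gX have "G i a b (snd (st i)) = fst (st i)" by (simp add: c_def)
    hence "st i \<in> bad i" using st[of i] ab(1) unfolding bad_def
      by (auto intro!: bexI[of _ "(a,b)"] image_eqI[of _ _ "snd (st i)"] simp: mem_Times_iff)
    thus False using st[of i] by blast
  next
    case (Y i)
    with v gY have "H i a b (fst (st i)) = snd (st i)" by (simp add: c_def)
    hence "st i \<in> bad i" using st[of i] ab(1) unfolding bad_def
      by (auto intro!: bexI[of _ "(a,b)"] image_eqI[of _ _ "fst (st i)"] simp: mem_Times_iff)
    thus False using st[of i] by blast
  qed
qed

lemma six: "finite B \<Longrightarrow> set [x1,x2,x3,x4,x5,x6] \<subseteq> B \<Longrightarrow> distinct [x1,x2,x3,x4,x5,x6] \<Longrightarrow> 6 \<le> card B"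
proof -
  assume a: "finite B" "set [x1,x2,x3,x4,x5,x6] \<subseteq> B" "distinct [x1,x2,x3,x4,x5,x6]"
  have "card (set [x1,x2,x3,x4,x5,x6]) = 6" using distinct_card[OF a(3)] by simp
  thus ?thesis using card_mono[OF a(1,2)] by simp
qed

lemma cover: fixes B :: "('a \<times> 'b) set" shows "finite B \<Longrightarrow> card B \<le> 5 \<Longrightarrow> \<exists>\<phi> \<psi>. \<forall>p\<in>B. \<phi> (snd p) = fst p \<or> \<psi> (fst p) = snd p"
proof (induction "card B" arbitrary: B rule: less_induct)
  case less
  have IH: "\<And>B' :: ('a \<times> 'b) set. card B' < card B \<Longrightarrow> finite B' \<Longrightarrow> card B' \<le> 5 \<Longrightarrow> \<exists>\<phi> \<psi>. \<forall>p\<in>B'. \<phi> (snd p) = fst p \<or> \<psi> (fst p) = snd p"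
    by (rule less.hyps)
  show ?case
  proof (cases "\<exists>a b. (a,b)\<in>B \<and> (\<forall>a'. (a',b)\<in>B \<longrightarrow> a'=a)")
    case True
    then obtain a b where ab: "(a,b)\<in>B" "\<And>a'. (a',b)\<in>B \<Longrightarrow> a'=a" by blast
    have lt: "card (B - {(a,b)}) < card B" using ab less.prems by (meson card_Diff1_less)
    have fi: "finite (B - {(a,b)})" using less.prems by simp
    have le: "card (B - {(a,b)}) \<le> 5" using lt less.prems by linarith
    obtain \<phi> \<psi> where h: "\<forall>p\<in>B - {(a,b)}. \<phi> (snd p) = fst p \<or> \<psi> (fst p) = snd p" using IH[OF lt fi le] by blast
    show ?thesis
    proof (intro exI ballI)
      fix p assume pB: "p \<in> B"
      obtain x y where p: "p = (x,y)" by fastforce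
      show "(\<phi>(b:=a)) (snd p) = fst p \<or> \<psi> (fst p) = snd p"
      proof (cases "y = b")
        case True thus ?thesis using ab(2)[of x] pB p by simp
      next
        case False
        have xy: "(x,y) \<in> B - {(a,b)}" using False pB p by auto
        show ?thesis using h[rule_format, OF xy] False p by simp
      qed
    qed
  next
    case F1: False
    show ?thesis
    proof (cases "\<exists>a b. (a,b)\<in>B \<and> (\<forall>b'. (a,b')\<in>B \<longrightarrow> b'=b)")
      case True
      then obtain a b where ab: "(a,b)\<in>B" "\<And>b'. (a,b')\<in>B \<Longrightarrow> b'=b" by blast
      have lt: "card (B - {(a,b)}) < card B" using ab less.prems by (meson card_Diff1_less)
      have fi: "finite (B - {(a,b)})" using less.prems by simp
      have le: "card (B - {(a,b)}) \<le> 5" using lt less.prems by linarith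
      obtain \<phi> \<psi> where h: "\<forall>p\<in>B - {(a,b)}. \<phi> (snd p) = fst p \<or> \<psi> (fst p) = snd p" using IH[OF lt fi le] by blast
      show ?thesis
      proof (intro exI ballI)
        fix p assume pB: "p \<in> B"
        obtain x y where p: "p = (x,y)" by fastforce
        show "\<phi> (snd p) = fst p \<or> (\<psi>(a:=b)) (fst p) = snd p"
        proof (cases "x = a")
          case True thus ?thesis using ab(2)[of y] pB p by simp
        next
          case False
        have xy: "(x,y) \<in> B - {(a,b)}" using False pB p by auto
        show ?thesis using h[rule_format, OF xy] False p by simp
        qed
      qed
    next
      case F2: False
      have col: "\<And>a b. (a,b)\<in>B \<Longrightarrow> \<exists>a'. (a',b)\<in>B \<and> a'\<noteq>a" using F1 by blast
      have row: "\<And>a b. (a,b)\<in>B \<Longrightarrow> \<exists>b'. (a,b')\<in>B \<and> b'\<noteq>b" using F2 by blast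
      show ?thesis
      proof (cases "B = {}")
        case True thus ?thesis by blast
      next
        case False
        then obtain a1 b1 where p1: "(a1,b1)\<in>B" by auto
        obtain a2 where p2: "(a2,b1)\<in>B" "a2\<noteq>a1" using col[OF p1] by blast
        obtain b2 where p3: "(a1,b2)\<in>B" "b2\<noteq>b1" using row[OF p1] by blast
        obtain b3 where p4: "(a2,b3)\<in>B" "b3\<noteq>b1" using row[OF p2(1)] by blast
        have fin: "finite B" by fact
        have rows: "a = a1 \<or> a = a2" if abB: "(a,b)\<in>B" for a b
        proof (rule ccontr)
          assume na: "\<not> ?thesis"
          obtain b' where "(a,b')\<in>B" "b'\<noteq>b" using row[OF abB] by blast
          hence "6 \<le> card B" using six[OF fin, of "(a1,b1)" "(a2,b1)" "(a1,b2)" "(a2,b3)" "(a,b)" "(a,b')"]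
            p1 p2 p3 p4 na abB by auto
          thus False using less.prems by simp
        qed
        have b32: "b3 = b2"
        proof (rule ccontr)
          assume nb: "b3 \<noteq> b2"
          obtain a4 where a4: "(a4,b2)\<in>B" "a4\<noteq>a1" using col[OF p3(1)] by blast
          hence q1: "(a2,b2)\<in>B" using rows[OF a4(1)] by auto
          obtain a5 where a5: "(a5,b3)\<in>B" "a5\<noteq>a2" using col[OF p4(1)] by blast
          hence q2: "(a1,b3)\<in>B" using rows[OF a5(1)] by auto
          have "6 \<le> card B" using six[OF fin, of "(a1,b1)" "(a2,b1)" "(a1,b2)" "(a2,b3)" "(a2,b2)" "(a1,b3)"]
            p1 p2 p3 p4 q1 q2 nb by auto
          thus False using less.prems by simp
        qed
        have cols: "b = b1 \<or> b = b2" if abB: "(a,b)\<in>B" for a b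
        proof (rule ccontr)
          assume nb: "\<not> ?thesis"
          obtain a' where a': "(a',b)\<in>B" "a'\<noteq>a" using col[OF abB] by blast
          have q: "(a1,b)\<in>B \<and> (a2,b)\<in>B" using rows[OF abB] rows[OF a'(1)] that a' by auto
          have "6 \<le> card B" using six[OF fin, of "(a1,b1)" "(a2,b1)" "(a1,b2)" "(a2,b2)" "(a1,b)" "(a2,b)"]
            p1 p2 p3 p4 q nb b32 by auto
          thus False using less.prems by simp
        qed
        show ?thesis
        proof (intro exI ballI)
          fix p assume "p \<in> B"
          then obtain a b where p: "p = (a,b)" "(a,b)\<in>B" by (cases p) auto
          show "(\<lambda>x. if x = b1 then a1 else a2) (snd p) = fst p \<or> (\<lambda>x. if x = a1 then b2 else b1) (fst p) = snd p"
            using rows[OF p(2)] cols[OF p(2)] p p2 p3 by auto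
        qed
      qed
    qed
  qed
qed

lemma lt12: "(s::nat) < 12 \<Longrightarrow> s \<in> {0,1,2,3,4,5,6,7,8,9,10,11}"
  by (simp add: less_Suc_eq numeral_eq_Suc)

definition grid :: "(nat \<times> nat) set" where "grid = {..<12} \<times> {..<12}"
definition gx :: "nat \<Rightarrow> nat \<Rightarrow> nat" where "gx k t = (t + 2*(k mod 6)) mod 12"
definition gy :: "nat \<Rightarrow> nat \<Rightarrow> nat" where "gy k s = (s + 23 - 2*(k mod 6)) mod 12"
definition pwin :: "nat \<Rightarrow> nat \<Rightarrow> nat \<Rightarrow> bool" where "pwin k s t \<longleftrightarrow> s = gx k t \<or> t = gy k s"
definition clamp :: "nat \<Rightarrow> nat" where "clamp x = (if x < 12 then x else 0)"

lemma pwin_ex: "(s::nat) < 12 \<Longrightarrow> t < 12 \<Longrightarrow> \<exists>k<6. pwin k s t"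
  unfolding pwin_def gx_def gy_def
  apply (rule exI[of _ "((s+12-t) mod 12) div 2"])
  using lt12[of s] lt12[of t] by auto

lemma card_grid: "card grid = 144" "finite grid" by (auto simp: grid_def card_cartesian_product)

lemma winnable12: "hat_winnable GV GE 12"
proof -
  define P where "P = PiE grid (\<lambda>_. {..<6::nat})"
  have finP: "finite P" unfolding P_def using card_grid by (simp add: finite_PiE)
  have "card P = 6 ^ 144" unfolding P_def using card_grid by (simp add: card_PiE)
  also have "\<dots> \<le> 66 ^ 144" by (rule power_mono) auto
  also have "\<dots> = card {1..m0}" by (simp add: m0_def)
  finally have "card P \<le> card {1..m0}" .
  then obtain h where h: "h ` P \<subseteq> {1..m0}" "inj_on h P" using card_le_inj[OF finP] by blast
  define enc where "enc = inv_into P h"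
  have encP: "h \<sigma> \<in> {1..m0} \<and> enc (h \<sigma>) = \<sigma>" if "\<sigma> \<in> P" for \<sigma>
    using h that by (auto simp: enc_def)
  define Bs where "Bs c = {p\<in>grid. \<forall>i\<in>{1..m0}. \<not> pwin (enc i p) (c (X i)) (c (Y i))}" for c :: "vtx \<Rightarrow> nat"
  have finBs: "finite (Bs c)" for c unfolding Bs_def using card_grid by simp
  have card_Bs: "card (Bs c) \<le> 5" if cv: "\<And>v. v \<in> GV \<Longrightarrow> c v < 12" for c
  proof (rule ccontr)
    assume "\<not> ?thesis"
    hence "6 \<le> card (Bs c)" by simp
    then obtain T where T: "T \<subseteq> Bs c" "card T = 6" by (meson obtain_subset_with_card_n)
    have finT: "finite T" using T finBs finite_subset by blast
    obtain e where e: "bij_betw e {0..<6::nat} T" using ex_bij_betw_nat_finite[OF finT] T by auto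
    define \<sigma> where "\<sigma> = (\<lambda>p. if p \<in> grid then (if p \<in> T then inv_into {0..<6} e p else 0) else undefined)"
    have inv: "inv_into {0..<6} e p \<in> {0..<6}" if "p \<in> T" for p
      using bij_betw_inv_into[OF e] that bij_betwE by blast
    have "\<sigma> \<in> P" unfolding P_def PiE_iff
    proof
      show "\<forall>p\<in>grid. \<sigma> p \<in> {..<6}" using inv by (auto simp: \<sigma>_def)
      show "\<sigma> \<in> extensional grid" by (simp add: \<sigma>_def extensional_def)
    qed
    from encP[OF this] obtain i where i: "i \<in> {1..m0}" "enc i = \<sigma>" by blast
    have st: "c (X i) < 12" "c (Y i) < 12" using cv i by auto
    obtain k where k: "k < 6" "pwin k (c (X i)) (c (Y i))" using pwin_ex[OF st] by blast
    have eT: "e k \<in> T" using e k(1) bij_betwE by fastforce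
    have inj: "inj_on e {0..<6}" using e bij_betw_def by blast
    have egrid: "e k \<in> grid" using eT T(1) by (auto simp: Bs_def)
    have "\<sigma> (e k) = k" using egrid eT inv_into_f_f[OF inj, of k] k(1) by (simp add: \<sigma>_def)
    moreover have "\<not> pwin (enc i (e k)) (c (X i)) (c (Y i))" using eT T(1) i(1) by (auto simp: Bs_def)
    ultimately show False using k(2) i(2) by simp
  qed
  define \<Phi> where "\<Phi> c = (SOME fp. \<forall>p\<in>Bs c. fst fp (snd p) = fst p \<or> snd fp (fst p) = snd p)" for c
  have \<Phi>: "\<forall>p\<in>Bs c. fst (\<Phi> c) (snd p) = fst p \<or> snd (\<Phi> c) (fst p) = snd p"
    if cv: "\<And>v. v \<in> GV \<Longrightarrow> c v < 12" for c
  proof -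
    obtain \<phi> \<psi> where "\<forall>p\<in>Bs c. \<phi> (snd p) = fst p \<or> \<psi> (fst p) = snd p"
      using cover[OF finBs card_Bs[of c, OF cv]] by blast
    hence "\<exists>fp. \<forall>p\<in>Bs c. fst fp (snd p) = fst p \<or> snd fp (fst p) = snd p"
      by (intro exI[of _ "(\<phi>,\<psi>)"]) simp
    thus ?thesis unfolding \<Phi>_def by (rule someI_ex)
  qed
  define g where "g w c = (case w of U \<Rightarrow> clamp (fst (\<Phi> c) (c V)) | V \<Rightarrow> clamp (snd (\<Phi> c) (c U))
     | X i \<Rightarrow> gx (enc i (c U, c V)) (c (Y i)) | Y i \<Rightarrow> gy (enc i (c U, c V)) (c (X i)))" for w c
  have BsEq: "Bs c = Bs c'" if "\<And>i. i \<in> {1..m0} \<Longrightarrow> c (X i) = c' (X i) \<and> c (Y i) = c' (Y i)" for c c'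
    unfolding Bs_def using that by auto
  have strat: "hat_strategy GV GE 12 g"
    unfolding hat_strategy_def
  proof (intro conjI ballI allI impI)
    fix w and c c' :: "vtx \<Rightarrow> nat" assume w: "w \<in> GV" and ag: "\<forall>u. GE w u \<longrightarrow> c u = c' u"
    show "g w c = g w c'"
    proof (cases w)
      case U
      have "Bs c = Bs c'" by (rule BsEq) (use ag U in auto)
      thus ?thesis using ag U by (simp add: g_def \<Phi>_def)
    next
      case V
      have "Bs c = Bs c'" by (rule BsEq) (use ag V in auto)
      thus ?thesis using ag V by (simp add: g_def \<Phi>_def)
    next
      case (X i) thus ?thesis using ag w by (simp add: g_def)
    next
      case (Y i) thus ?thesis using ag w by (simp add: g_def)
    qed
  next
    fix w and c :: "vtx \<Rightarrow> nat" show "g w c < 12"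
      by (cases w) (auto simp: g_def clamp_def gx_def gy_def)
  qed
  have "winning_strategy GV GE 12 g"
    unfolding winning_strategy_def
  proof (intro conjI strat allI impI)
    fix c :: "vtx \<Rightarrow> nat" assume cv0: "\<forall>v\<in>GV. c v < 12"
    hence cv: "\<And>v. v \<in> GV \<Longrightarrow> c v < 12" by blast
    have ab: "(c U, c V) \<in> grid" using cv by (auto simp: grid_def)
    show "\<exists>v\<in>GV. g v c = c v"
    proof (cases "\<exists>i\<in>{1..m0}. pwin (enc i (c U, c V)) (c (X i)) (c (Y i))")
      case True
      then obtain i where i: "i \<in> {1..m0}" "pwin (enc i (c U, c V)) (c (X i)) (c (Y i))" by blast
      show ?thesis
      proof (cases "c (X i) = gx (enc i (c U, c V)) (c (Y i))")
        case True thus ?thesis using i by (intro bexI[of _ "X i"]) (auto simp: g_def)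
      next
        case False
        hence "c (Y i) = gy (enc i (c U, c V)) (c (X i))" using i(2) by (simp add: pwin_def)
        thus ?thesis using i by (intro bexI[of _ "Y i"]) (auto simp: g_def)
      qed
    next
      case False
      hence "(c U, c V) \<in> Bs c" using ab by (auto simp: Bs_def)
      hence "fst (\<Phi> c) (c V) = c U \<or> snd (\<Phi> c) (c U) = c V" using \<Phi>[of c, OF cv] by fastforce
      thus ?thesis
      proof
        assume "fst (\<Phi> c) (c V) = c U"
        thus ?thesis using cv[of U] by (intro bexI[of _ U]) (auto simp: g_def clamp_def)
      next
        assume "snd (\<Phi> c) (c U) = c V"
        thus ?thesis using cv[of V] by (intro bexI[of _ V]) (auto simp: g_def clamp_def)
      qed
    qed
  qed
  thus ?thesis unfolding hat_winnable_def by blast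
qed


lemma segUV: "z \<in> closed_segment \<i> (-\<i>) \<Longrightarrow> Re z = 0 \<and> -1 \<le> Im z \<and> Im z \<le> 1"
  by (auto simp: in_segment)
lemma segU: "z \<in> closed_segment \<i> (complex_of_real r) \<Longrightarrow> 0 \<le> Im z \<and> Im z \<le> 1 \<and> Re z = (1 - Im z) * r"
  by (auto simp: in_segment)
lemma segV: "z \<in> closed_segment (-\<i>) (complex_of_real r) \<Longrightarrow> -1 \<le> Im z \<and> Im z \<le> 0 \<and> Re z = (1 + Im z) * r"
  by (auto simp: in_segment)
lemma segR: "z \<in> closed_segment (complex_of_real r) (complex_of_real (r+1)) \<Longrightarrow> Im z = 0 \<and> r \<le> Re z \<and> Re z \<le> r + 1"
  by (auto simp: in_segment algebra_simps)

definition rp :: "vtx \<Rightarrow> real" where "rp w = (case w of X i \<Rightarrow> 2 * real i | Y i \<Rightarrow> 2 * real i + 1 | _ \<Rightarrow> 0)"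
definition fpos :: "vtx \<Rightarrow> complex" where "fpos w = (case w of U \<Rightarrow> \<i> | V \<Rightarrow> -\<i> | _ \<Rightarrow> complex_of_real (rp w))"
definition RR :: "vtx \<Rightarrow> bool" where "RR w \<longleftrightarrow> (\<exists>i. 1 \<le> i \<and> (w = X i \<or> w = Y i))"
definition CE :: "vtx \<Rightarrow> vtx \<Rightarrow> bool" where
  "CE a b \<longleftrightarrow> (a = U \<and> b = V) \<or> (a = U \<and> RR b) \<or> (a = V \<and> RR b) \<or> (\<exists>i. 1 \<le> i \<and> a = X i \<and> b = Y i)"

lemma fpos_simps[simp]: "fpos U = \<i>" "fpos V = -\<i>" "RR w \<Longrightarrow> fpos w = complex_of_real (rp w)"
  by (auto simp: fpos_def RR_def)
lemma rp_XY[simp]: "rp (X i) = 2 * real i" "rp (Y i) = 2 * real i + 1" by (auto simp: rp_def)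
lemma RR_UV[simp]: "\<not> RR U" "\<not> RR V" by (auto simp: RR_def)
lemma RR_ge: "RR w \<Longrightarrow> rp w \<ge> 2" by (auto simp: RR_def)
lemma RR_inj: assumes "RR w" "RR w'" "rp w = rp w'" shows "w = w'"
proof -
  from assms(1,2) obtain i j where "w = X i \<or> w = Y i" "w' = X j \<or> w' = Y j" by (auto simp: RR_def)
  moreover have "2 * real i \<noteq> 2 * real j + 1" for i j :: nat
  proof
    assume "2 * real i = 2 * real j + 1"
    hence "real (2*i) = real (2*j+1)" by simp
    hence "2*i = 2*j+1" by (simp only: of_nat_eq_iff)
    hence "(2*i) mod 2 = (2*j+1) mod 2" by simp
    thus False by simp
  qed
  moreover have "2 * real i = 2 * real j \<Longrightarrow> i = j" for i j :: nat by simp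
  ultimately show ?thesis using assms(3) by (elim disjE) (simp_all, metis)
qed
lemma RR_int: assumes "RR w" "2 * real i \<le> rp w" "rp w \<le> 2 * real i + 1" shows "w = X i \<or> w = Y i"
proof -
  from assms(1) obtain j where j: "w = X j \<or> w = Y j" by (auto simp: RR_def)
  hence "2 * real i \<le> 2 * real j + 1" "2 * real j \<le> 2 * real i + 1" using assms(2,3) by auto
  hence "real (2*i) \<le> real (2*j+1)" "real (2*j) \<le> real (2*i+1)" by simp_all
  hence "2*i \<le> 2*j+1" "2*j \<le> 2*i+1" by (simp_all only: of_nat_le_iff)
  hence "i = j" by linarith
  thus ?thesis using j by simp
qed

lemma complex_i: "Re z = 0 \<Longrightarrow> Im z = 1 \<Longrightarrow> z = \<i>" by (simp add: complex_eq_iff)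
lemma complex_mi: "Re z = 0 \<Longrightarrow> Im z = -1 \<Longrightarrow> z = -\<i>" by (simp add: complex_eq_iff)
lemma complex_r: "Im z = 0 \<Longrightarrow> z = complex_of_real (Re z)" by (simp add: complex_eq_iff)

lemma c_UV_U: "rp w \<ge> 2 \<Longrightarrow> z \<in> closed_segment \<i> (-\<i>) \<Longrightarrow> z \<in> closed_segment \<i> (complex_of_real (rp w)) \<Longrightarrow> z = \<i>"
proof -
  assume a: "rp w \<ge> 2" "z \<in> closed_segment \<i> (-\<i>)" "z \<in> closed_segment \<i> (complex_of_real (rp w))"
  from segUV[OF a(2)] segU[OF a(3)] have "Re z = 0" "(1 - Im z) * rp w = 0" by auto
  hence "Im z = 1" using a(1) by simp
  thus ?thesis using \<open>Re z = 0\<close> by (rule complex_i[rotated])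
qed
lemma c_UV_V: "rp w \<ge> 2 \<Longrightarrow> z \<in> closed_segment \<i> (-\<i>) \<Longrightarrow> z \<in> closed_segment (-\<i>) (complex_of_real (rp w)) \<Longrightarrow> z = -\<i>"
proof -
  assume a: "rp w \<ge> 2" "z \<in> closed_segment \<i> (-\<i>)" "z \<in> closed_segment (-\<i>) (complex_of_real (rp w))"
  from segUV[OF a(2)] segV[OF a(3)] have "Re z = 0" "(1 + Im z) * rp w = 0" by auto
  hence "Im z = -1" using a(1) by simp
  thus ?thesis using \<open>Re z = 0\<close> by (rule complex_mi[rotated])
qed
lemma c_UV_R: "r \<ge> 2 \<Longrightarrow> z \<in> closed_segment \<i> (-\<i>) \<Longrightarrow> z \<in> closed_segment (complex_of_real r) (complex_of_real (r+1)) \<Longrightarrow> False"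
proof -
  assume a: "r \<ge> 2" "z \<in> closed_segment \<i> (-\<i>)" "z \<in> closed_segment (complex_of_real r) (complex_of_real (r+1))"
  have "Re z = 0" using segUV[OF a(2)] by blast
  moreover have "r \<le> Re z" using segR[OF a(3)] by blast
  ultimately show False using a(1) by linarith
qed
lemma c_U_U: "RR w \<Longrightarrow> RR w' \<Longrightarrow> w \<noteq> w' \<Longrightarrow> z \<in> closed_segment \<i> (complex_of_real (rp w)) \<Longrightarrow> z \<in> closed_segment \<i> (complex_of_real (rp w')) \<Longrightarrow> z = \<i>"
proof -
  assume a: "RR w" "RR w'" "w \<noteq> w'" "z \<in> closed_segment \<i> (complex_of_real (rp w))" "z \<in> closed_segment \<i> (complex_of_real (rp w'))"
  from segU[OF a(4)] segU[OF a(5)] have e: "(1 - Im z) * rp w = (1 - Im z) * rp w'" "Re z = (1 - Im z) * rp w" by auto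
  have "rp w \<noteq> rp w'" using RR_inj a by blast
  hence "Im z = 1" using e(1) by simp
  thus ?thesis using e(2) complex_i by simp
qed
lemma c_V_V: "RR w \<Longrightarrow> RR w' \<Longrightarrow> w \<noteq> w' \<Longrightarrow> z \<in> closed_segment (-\<i>) (complex_of_real (rp w)) \<Longrightarrow> z \<in> closed_segment (-\<i>) (complex_of_real (rp w')) \<Longrightarrow> z = -\<i>"
proof -
  assume a: "RR w" "RR w'" "w \<noteq> w'" "z \<in> closed_segment (-\<i>) (complex_of_real (rp w))" "z \<in> closed_segment (-\<i>) (complex_of_real (rp w'))"
  from segV[OF a(4)] segV[OF a(5)] have e: "(1 + Im z) * rp w = (1 + Im z) * rp w'" "Re z = (1 + Im z) * rp w" by auto
  have "rp w \<noteq> rp w'" using RR_inj a by blast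
  hence "Im z = -1" using e(1) by simp
  thus ?thesis using e(2) complex_mi by simp
qed
lemma c_U_V: "RR w \<Longrightarrow> RR w' \<Longrightarrow> z \<in> closed_segment \<i> (complex_of_real (rp w)) \<Longrightarrow> z \<in> closed_segment (-\<i>) (complex_of_real (rp w')) \<Longrightarrow> w = w' \<and> z = complex_of_real (rp w)"
proof -
  assume a: "RR w" "RR w'" "z \<in> closed_segment \<i> (complex_of_real (rp w))" "z \<in> closed_segment (-\<i>) (complex_of_real (rp w'))"
  from segU[OF a(3)] segV[OF a(4)] have e: "Im z = 0" "Re z = rp w" "Re z = rp w'" by auto
  have "z = complex_of_real (rp w)" using complex_r[OF e(1)] e(2) by metis
  thus ?thesis using RR_inj[OF a(1,2)] e by simp
qed
lemma c_U_R: "RR w \<Longrightarrow> z \<in> closed_segment \<i> (complex_of_real (rp w)) \<Longrightarrow> z \<in> closed_segment (complex_of_real (2 * real i)) (complex_of_real (2 * real i + 1)) \<Longrightarrow> (w = X i \<or> w = Y i) \<and> z = complex_of_real (rp w)"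
proof -
  assume a: "RR w" "z \<in> closed_segment \<i> (complex_of_real (rp w))" "z \<in> closed_segment (complex_of_real (2 * real i)) (complex_of_real (2 * real i + 1))"
  from segU[OF a(2)] segR[OF a(3)] have e: "Im z = 0" "Re z = rp w" "2 * real i \<le> Re z" "Re z \<le> 2 * real i + 1" by auto
  have "z = complex_of_real (rp w)" using complex_r[OF e(1)] e(2) by metis
  thus ?thesis using RR_int[OF a(1)] e by simp
qed
lemma c_V_R: "RR w \<Longrightarrow> z \<in> closed_segment (-\<i>) (complex_of_real (rp w)) \<Longrightarrow> z \<in> closed_segment (complex_of_real (2 * real i)) (complex_of_real (2 * real i + 1)) \<Longrightarrow> (w = X i \<or> w = Y i) \<and> z = complex_of_real (rp w)"
proof -
  assume a: "RR w" "z \<in> closed_segment (-\<i>) (complex_of_real (rp w))" "z \<in> closed_segment (complex_of_real (2 * real i)) (complex_of_real (2 * real i + 1))"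
  from segV[OF a(2)] segR[OF a(3)] have e: "Im z = 0" "Re z = rp w" "2 * real i \<le> Re z" "Re z \<le> 2 * real i + 1" by auto
  have "z = complex_of_real (rp w)" using complex_r[OF e(1)] e(2) by metis
  thus ?thesis using RR_int[OF a(1)] e by simp
qed
lemma c_R_R: "i \<noteq> j \<Longrightarrow> z \<in> closed_segment (complex_of_real (2 * real i)) (complex_of_real (2 * real i + 1)) \<Longrightarrow> z \<in> closed_segment (complex_of_real (2 * real j)) (complex_of_real (2 * real j + 1)) \<Longrightarrow> False"
proof -
  assume a: "i \<noteq> j" "z \<in> closed_segment (complex_of_real (2 * real i)) (complex_of_real (2 * real i + 1))" "z \<in> closed_segment (complex_of_real (2 * real j)) (complex_of_real (2 * real j + 1))"
  from segR[OF a(2)] segR[OF a(3)] have "2 * real i \<le> 2 * real j + 1" "2 * real j \<le> 2 * real i + 1" by auto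
  hence "real (2*i) \<le> real (2*j+1)" "real (2*j) \<le> real (2*i+1)" by simp_all
  hence "2*i \<le> 2*j+1" "2*j \<le> 2*i+1" by (simp_all only: of_nat_le_iff)
  thus False using a(1) by linarith
qed

lemma fpos_XY[simp]: "fpos (X i) = complex_of_real (2 * real i)" "fpos (Y i) = complex_of_real (2 * real i + 1)"
  by (auto simp: fpos_def)

lemma RR_XY: "1 \<le> i \<Longrightarrow> RR (X i)" "1 \<le> i \<Longrightarrow> RR (Y i)" by (auto simp: RR_def)

lemma M:
  assumes ab: "CE a b" and cd: "CE c d" and ne: "{a,b} \<noteq> {c,d}"
    and z1: "z \<in> closed_segment (fpos a) (fpos b)" and z2: "z \<in> closed_segment (fpos c) (fpos d)"
  shows "z \<in> fpos ` ({a,b} \<inter> {c,d})"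
proof -
  from ab consider (aUV) "a = U" "b = V" | (aU) "a = U" "RR b" | (aV) "a = V" "RR b" | (aR) i where "1 \<le> i" "a = X i" "b = Y i"
    unfolding CE_def by blast
  note A = this
  from cd consider (cUV) "c = U" "d = V" | (cU) "c = U" "RR d" | (cV) "c = V" "RR d" | (cR) j where "1 \<le> j" "c = X j" "d = Y j"
    unfolding CE_def by blast
  note B = this
  show ?thesis
  proof (cases rule: A)
    case aUV note a = this
    show ?thesis
    proof (cases rule: B)
      case cUV thus ?thesis using a ne by simp
    next
      case cU
      have "z = \<i>" using c_UV_U[OF RR_ge[OF cU(2)]] z1 z2 a cU by simp
      thus ?thesis using a cU by (intro image_eqI[of _ _ U]) auto
    next
      case cV
      have "z = -\<i>" using c_UV_V[OF RR_ge[OF cV(2)]] z1 z2 a cV by simp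
      thus ?thesis using a cV by (intro image_eqI[of _ _ V]) auto
    next
      case (cR j)
      have "2 \<le> 2 * real j" using cR by simp
      from c_UV_R[OF this] show ?thesis using z1 z2 a cR by simp
    qed
  next
    case aU note a = this
    show ?thesis
    proof (cases rule: B)
      case cUV
      have "z = \<i>" using c_UV_U[OF RR_ge[OF a(2)]] z1 z2 a cUV by simp
      thus ?thesis using a cUV by (intro image_eqI[of _ _ U]) auto
    next
      case cU
      have "b \<noteq> d" using ne a cU by auto
      have "z = \<i>" using c_U_U[OF a(2) cU(2) \<open>b \<noteq> d\<close>] z1 z2 a cU by simp
      thus ?thesis using a cU by (intro image_eqI[of _ _ U]) auto
    next
      case cV
      have "b = d \<and> z = complex_of_real (rp b)" using c_U_V[OF a(2) cV(2)] z1 z2 a cV by simp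
      thus ?thesis using a cV by (intro image_eqI[of _ _ b]) auto
    next
      case (cR j)
      have "(b = X j \<or> b = Y j) \<and> z = complex_of_real (rp b)" using c_U_R[OF a(2)] z1 z2 a cR by simp
      thus ?thesis using a cR by (intro image_eqI[of _ _ b]) auto
    qed
  next
    case aV note a = this
    show ?thesis
    proof (cases rule: B)
      case cUV
      have "z = -\<i>" using c_UV_V[OF RR_ge[OF a(2)]] z1 z2 a cUV by simp
      thus ?thesis using a cUV by (intro image_eqI[of _ _ V]) auto
    next
      case cU
      have "d = b \<and> z = complex_of_real (rp d)" using c_U_V[OF cU(2) a(2)] z1 z2 a cU by simp
      thus ?thesis using a cU by (intro image_eqI[of _ _ b]) auto
    next
      case cV
      have "b \<noteq> d" using ne a cV by auto
      have "z = -\<i>" using c_V_V[OF a(2) cV(2) \<open>b \<noteq> d\<close>] z1 z2 a cV by simp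
      thus ?thesis using a cV by (intro image_eqI[of _ _ V]) auto
    next
      case (cR j)
      have "(b = X j \<or> b = Y j) \<and> z = complex_of_real (rp b)" using c_V_R[OF a(2)] z1 z2 a cR by simp
      thus ?thesis using a cR by (intro image_eqI[of _ _ b]) auto
    qed
  next
    case (aR i) note a = this
    show ?thesis
    proof (cases rule: B)
      case cUV
      have "2 \<le> 2 * real i" using a by simp
      from c_UV_R[OF this] show ?thesis using z1 z2 a cUV by simp
    next
      case cU
      have "(d = X i \<or> d = Y i) \<and> z = complex_of_real (rp d)" using c_U_R[OF cU(2)] z1 z2 a cU by simp
      thus ?thesis using a cU by (intro image_eqI[of _ _ d]) auto
    next
      case cV
      have "(d = X i \<or> d = Y i) \<and> z = complex_of_real (rp d)" using c_V_R[OF cV(2)] z1 z2 a cV by simp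
      thus ?thesis using a cV by (intro image_eqI[of _ _ d]) auto
    next
      case (cR j)
      have "i \<noteq> j" using ne a cR by auto
      from c_R_R[OF this] show ?thesis using z1 z2 a cR by (simp, blast)
    qed
  qed
qed


lemma GV_cases: "w \<in> GV \<Longrightarrow> w = U \<or> w = V \<or> RR w"
  by (cases w) (auto simp: RR_def)

lemma N:
  assumes ab: "CE a b" and w: "w \<in> GV" and z: "fpos w \<in> closed_segment (fpos a) (fpos b)"
  shows "fpos w \<in> {fpos a, fpos b}"
proof -
  from ab consider (aUV) "a = U" "b = V" | (aU) "a = U" "RR b" | (aV) "a = V" "RR b" | (aR) i where "1 \<le> i" "a = X i" "b = Y i"
    unfolding CE_def by blast
  thus ?thesis
  proof cases
    case aUV
    { assume r: "RR w"
      have "Re (fpos w) = 0" using segUV z aUV by simp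
      hence False using RR_ge[OF r] r by simp }
    thus ?thesis using GV_cases[OF w] aUV by auto
  next
    case aU
    { assume "w = V"
      hence False using segU[of "fpos w" "rp b"] z aU by simp }
    moreover
    { assume r: "RR w"
      have "Im (fpos w) = 0" using r by simp
      hence "Re (fpos w) = rp b" using segU[of "fpos w" "rp b"] z aU by simp
      hence "w = b" using RR_inj[OF r aU(2)] r by simp }
    ultimately show ?thesis using GV_cases[OF w] aU by auto
  next
    case aV
    { assume "w = U"
      hence False using segV[of "fpos w" "rp b"] z aV by simp }
    moreover
    { assume r: "RR w"
      have "Im (fpos w) = 0" using r by simp
      hence "Re (fpos w) = rp b" using segV[of "fpos w" "rp b"] z aV by simp
      hence "w = b" using RR_inj[OF r aV(2)] r by simp }
    ultimately show ?thesis using GV_cases[OF w] aV by auto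
  next
    case (aR i)
    have z': "fpos w \<in> closed_segment (complex_of_real (2 * real i)) (complex_of_real (2 * real i + 1))"
      using z aR by simp
    note sr = segR[OF z']
    { assume "w = U \<or> w = V"
      hence False using sr by auto }
    moreover
    { assume r: "RR w"
      have "w = X i \<or> w = Y i" using RR_int[OF r] sr r by simp }
    ultimately show ?thesis using GV_cases[OF w] aR by auto
  qed
qed

lemma GE_CE: "GE a b \<Longrightarrow> CE a b \<or> CE b a"
  by (cases a; cases b) (auto simp: GE_def CE_def RR_def)

lemma fpos_inj: "inj_on fpos GV"
proof
  fix w w' assume w: "w \<in> GV" "w' \<in> GV" and e: "fpos w = fpos w'"
  have imU: "Im (fpos U) = 1" "Im (fpos V) = -1" by simp_all
  have imR: "RR x \<Longrightarrow> Im (fpos x) = 0" for x by simp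
  have d1: "w = U \<or> w = V \<or> RR w" and d2: "w' = U \<or> w' = V \<or> RR w'" using GV_cases w by auto
  have ie: "Im (fpos w) = Im (fpos w')" using e by simp
  show "w = w'"
  proof (cases "RR w \<and> RR w'")
    case True
    hence "rp w = rp w'" using e by simp
    thus ?thesis using RR_inj True by blast
  next
    case False
    thus ?thesis using d1 d2 ie imR[of w] imR[of w'] by auto
  qed
qed

lemma planar_G: "planar GV GE"
  unfolding planar_def
proof (intro exI conjI allI impI)
  show "inj_on fpos GV" by (rule fpos_inj)
  fix a b assume ab: "GE a b"
  have abGV: "a \<in> GV" "b \<in> GV" "a \<noteq> b" using ab simple unfolding simple_graph_def by auto
  hence "fpos a \<noteq> fpos b" using fpos_inj by (auto dest: inj_onD)
  thus "arc (linepath (fpos a) (fpos b))" by simp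
  show "pathstart (linepath (fpos a) (fpos b)) = fpos a" by simp
  show "pathfinish (linepath (fpos a) (fpos b)) = fpos b" by simp
  show "path_image (linepath (fpos a) (fpos b)) \<inter> fpos ` GV \<subseteq> {fpos a, fpos b}"
  proof
    fix z assume "z \<in> path_image (linepath (fpos a) (fpos b)) \<inter> fpos ` GV"
    then obtain w where w: "w \<in> GV" "z = fpos w" "fpos w \<in> closed_segment (fpos a) (fpos b)" by auto
    from GE_CE[OF ab] show "z \<in> {fpos a, fpos b}"
    proof
      assume "CE a b" thus ?thesis using N w by blast
    next
      assume "CE b a" thus ?thesis using N[of b a w] w closed_segment_commute by blast
    qed
  qed
next
  fix a b c d assume ab: "GE a b" and cd: "GE c d" and ne: "{a,b} \<noteq> {c,d}"
  show "path_image (linepath (fpos a) (fpos b)) \<inter> path_image (linepath (fpos c) (fpos d)) \<subseteq> fpos ` ({a, b} \<inter> {c, d})"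
  proof
    fix z assume "z \<in> path_image (linepath (fpos a) (fpos b)) \<inter> path_image (linepath (fpos c) (fpos d))"
    hence z: "z \<in> closed_segment (fpos a) (fpos b)" "z \<in> closed_segment (fpos b) (fpos a)"
             "z \<in> closed_segment (fpos c) (fpos d)" "z \<in> closed_segment (fpos d) (fpos c)"
      using closed_segment_commute by auto
    have ne': "{b,a} \<noteq> {c,d}" "{a,b} \<noteq> {d,c}" "{b,a} \<noteq> {d,c}" using ne by (auto simp: insert_commute)
    have s1: "{b,a} = {a,b}" "{d,c} = {c,d}" by auto
    from GE_CE[OF ab] GE_CE[OF cd] show "z \<in> fpos ` ({a, b} \<inter> {c, d})"
      using M[OF _ _ ne z(1) z(3)] M[OF _ _ ne'(1) z(2) z(3)] M[OF _ _ ne'(2) z(1) z(4)] M[OF _ _ ne'(3) z(2) z(4)]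
      unfolding s1 by blast
  qed
qed


theorem theorem1:
  shows "simple_graph GV GE \<and> planar GV GE \<and> HG GV GE = 12"
proof -
  have "HG GV GE = 12" unfolding HG_def
  proof (rule Greatest_equality)
    show "hat_winnable GV GE 12" by (rule winnable12)
  next
    fix y assume "hat_winnable GV GE y"
    thus "y \<le> 12" by (cases "13 \<le> y") (auto simp: hat_winnable_def dest: not_win)
  qed
  thus ?thesis using simple planar_G by blast
qed

end
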